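(* Let $N\ge 1$ and $n\ge 1$ be integers, and let $x>1$ and $1\le y<2$ be real numbers. Let $\mathcal{S}_0,\dots,\mathcal{S}_{n-1}$ be nonempty sets of QPSK sequences of length $N$ such that, for every $0\le i\le n-1$: (a) $\mathrm{PEP}(\mathbf{s})\le x\,y^{2i}N$ for every $\mathbf{s}\in\mathcal{S}_i$; and (b) if $\mathbf{s}\in\mathcal{S}_i$ then $j^m\mathbf{s}\in\mathcal{S}_i$ for every $m\in\mathbb{Z}_4$. Let $\mathcal{A}$ be the set of all $2^{2n}$-QAM sequences $\mathbf{a}$ associated with tuples $(\mathbf{s}_0,\dots,\mathbf{s}_{n-1})$ with $\mathbf{s}_i\in\mathcal{S}_i$ for all $i$. Then $$\mathrm{PMEPR}(\mathcal{A})\le \frac{3}{4}\cdot\frac{2^{2n}}{2^{2n}-1}\cdot\left(\frac{1-(\frac{y}{2})^{n}}{1-\frac{y}{2}}\right)^2\cdot x.$$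
   Context: Let $j=\sqrt{-1}$. Fix $T>0$ and reals $f_0,\Delta f$ with $T\Delta f$ a positive integer; set $f_k=f_0+k\Delta f$. For a complex sequence $\mathbf{a}=(a_0,\dots,a_{N-1})$ define $S_{\mathbf{a}}(t)=\sum_{k=0}^{N-1}a_ke^{2\pi j f_k t}$, $P_{\mathbf{a}}(t)=|S_{\mathbf{a}}(t)|^2$, and $\mathrm{PEP}(\mathbf{a})=\sup_{t\in[0,T]}P_{\mathbf{a}}(t)$. A QPSK sequence of length $N$ is a sequence $\mathbf{s}=(s_0,\dots,s_{N-1})$ with every $s_k\in\{1,j,-1,-j\}$; $j^m\mathbf{s}=(j^ms_0,\dots,j^ms_{N-1})$. The $2^{2n}$-QAM sequence associated with QPSK sequences $\mathbf{s}_0,\dots,\mathbf{s}_{n-1}$, $\mathbf{s}_i=(s_{i,0},\dots,s_{i,N-1})$, is $\mathbf{a}=(a_0,\dots,a_{N-1})$ with $a_k=\frac{\sqrt2}{2}e^{\pi j/4}\sum_{i=0}^{n-1}2^{n-1-i}s_{i,k}$. The mean envelope power of $\mathcal{A}$ is $P_{av}(\mathcal{A})=\mathbb{E}\big[\frac1T\int_0^TP_{\mathbf{a}}(t)\,dt\big]=\mathbb{E}\|\mathbf{a}\|^2$, where the expectation is over $\mathbf{a}$ associated with $(\mathbf{s}_0,\dots,\mathbf{s}_{n-1})$ chosen uniformly at random from $\mathcal{S}_0\times\cdots\times\mathcal{S}_{n-1}$ (each $\mathbf{s}_i$ uniform in $\mathcal{S}_i$, independently). The peak-to-mean envelope power ratio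 is $\mathrm{PMEPR}(\mathcal{A})=\max_{\mathbf{a}\in\mathcal{A}}\mathrm{PEP}(\mathbf{a})/P_{av}(\mathcal{A})$. *)

theory Defs
  imports "HOL-Analysis.Analysis"
begin

definition env_signal :: "real \<Rightarrow> real \<Rightarrow> complex list \<Rightarrow> real \<Rightarrow> complex" where
  "env_signal f0 df a t =
     (\<Sum>k<length a. a ! k * exp (2 * of_real pi * \<i> * of_real ((f0 + real k * df) * t)))"

definition env_power :: "real \<Rightarrow> real \<Rightarrow> complex list \<Rightarrow> real \<Rightarrow> real" where
  "env_power f0 df a t = (cmod (env_signal f0 df a t))\<^sup>2"

definition PEP :: "real \<Rightarrow> real \<Rightarrow> real \<Rightarrow> complex list \<Rightarrow> real" where
  "PEP T f0 df a = (SUP t\<in>{0..T}. env_power f0 df a t)"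

definition qpsk_seq :: "nat \<Rightarrow> complex list \<Rightarrow> bool" where
  "qpsk_seq N s \<longleftrightarrow> length s = N \<and> set s \<subseteq> {1, \<i>, -1, -\<i>}"

definition rot_seq :: "nat \<Rightarrow> complex list \<Rightarrow> complex list" where
  "rot_seq m s = map (\<lambda>z. \<i> ^ m * z) s"

definition qam_seq :: "nat \<Rightarrow> nat \<Rightarrow> (nat \<Rightarrow> complex list) \<Rightarrow> complex list" where
  "qam_seq N n ss = map (\<lambda>k. (of_real (sqrt 2 / 2)) * exp (of_real pi * \<i> / 4) *
       (\<Sum>i<n. of_nat (2 ^ (n - 1 - i)) * (ss i ! k))) [0..<N]"

definition qam_set :: "nat \<Rightarrow> nat \<Rightarrow> (nat \<Rightarrow> complex list set) \<Rightarrow> complex list set" where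
  "qam_set N n S = {qam_seq N n ss | ss. \<forall>i<n. ss i \<in> S i}"

definition P_av :: "real \<Rightarrow> real \<Rightarrow> real \<Rightarrow> nat \<Rightarrow> nat \<Rightarrow> (nat \<Rightarrow> complex list set) \<Rightarrow> real" where
  "P_av T f0 df N n S =
     (\<Sum>ss\<in>PiE {..<n} S. (1 / T) * integral {0..T} (env_power f0 df (qam_seq N n ss)))
       / real (\<Prod>i<n. card (S i))"

definition PMEPR :: "real \<Rightarrow> real \<Rightarrow> real \<Rightarrow> nat \<Rightarrow> nat \<Rightarrow> (nat \<Rightarrow> complex list set) \<Rightarrow> real" where
  "PMEPR T f0 df N n S = Max (PEP T f0 df ` qam_set N n S) / P_av T f0 df N n S"

end

theory Submission
  imports Defs
begin

lemma exp_integral: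
  fixes T df :: real and d :: int and m :: nat
  assumes T: "T > 0" and Tdf: "T * df = real m" and m: "m > 0"
  shows "((\<lambda>t. exp (2 * of_real pi * \<i> * of_real (real_of_int d * df * t))) has_integral
           (if d = 0 then of_real T else 0)) {0..T}"
proof (cases "d = 0")
  case True
  then show ?thesis using T has_integral_const_real[of "1::complex" 0 T] by (simp add: scaleR_conv_of_real)
next
  case False
  have df: "df > 0" using T Tdf m by (metis mult_pos_pos of_nat_0_less_iff zero_less_mult_pos)
  define c where "c = 2 * of_real pi * \<i> * of_real (real_of_int d * df)"
  have c0: "c \<noteq> 0" using False df by (simp add: c_def)
  have eq: "\<And>t. exp (2 * of_real pi * \<i> * of_real (real_of_int d * df * t)) = exp (c * of_real t)"
    by (simp add: c_def mult_ac)
  have "((\<lambda>t. exp (c * of_real t)) has_integral (exp (c * of_real T) / c - exp (c * of_real 0) / c)) {0..T}"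
  proof (rule fundamental_theorem_of_calculus)
    show "0 \<le> T" using T by simp
    fix t assume "t \<in> {0..T}"
    have "((\<lambda>z. exp (c * z) / c) has_field_derivative exp (c * of_real t)) (at (of_real t))"
      using c0 by (auto intro!: derivative_eq_intros)
    then show "((\<lambda>t. exp (c * of_real t) / c) has_vector_derivative exp (c * of_real t)) (at t within {0..T})"
      by (rule has_vector_derivative_real_field)
  qed
  moreover have "exp (c * of_real T) = 1"
  proof -
    have "c * of_real T = 2 * of_real pi * \<i> * of_real (real_of_int (d * int m))"
    proof -
      have h: "complex_of_real T * complex_of_real df = of_nat m"
        by (metis Tdf of_real_mult of_real_of_nat_eq)
      show ?thesis unfolding c_def using h
        by (simp add: mult_ac)
    qed
    then show ?thesis by (simp add: exp_eq_1) (metis mult.commute of_int_mult of_int_of_nat_eq)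
  qed
  ultimately show ?thesis using False eq by simp
qed

lemma E_mul:
  fixes f0 df t :: real and k l :: nat
  shows "exp (2 * of_real pi * \<i> * of_real ((f0 + real k * df) * t)) *
         cnj (exp (2 * of_real pi * \<i> * of_real ((f0 + real l * df) * t)))
       = exp (2 * of_real pi * \<i> * of_real (real_of_int (int k - int l) * df * t))"
proof -
  have "cnj (exp (2 * of_real pi * \<i> * of_real ((f0 + real l * df) * t)))
      = exp (- (2 * of_real pi * \<i> * of_real ((f0 + real l * df) * t)))"
    by (simp add: exp_cnj)
  then show ?thesis
    by (simp add: exp_add[symmetric] algebra_simps)
qed

lemma env_power_integral:
  fixes T df f0 :: real and m :: nat and a :: "complex list"
  assumes T: "T > 0" and Tdf: "T * df = real m" and m: "m > 0"
  shows "integral {0..T} (env_power f0 df a) = T * (\<Sum>k<length a. (cmod (a!k))\<^sup>2)"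
proof -
  let ?L = "length a"
  let ?G = "\<lambda>k l t. (a!k * cnj (a!l)) * exp (2 * of_real pi * \<i> * of_real (real_of_int (int k - int l) * df * t))"
  have key: "complex_of_real (env_power f0 df a t) = (\<Sum>k<?L. \<Sum>l<?L. ?G k l t)" for t
  proof -
    have "complex_of_real (env_power f0 df a t) = env_signal f0 df a t * cnj (env_signal f0 df a t)"
      unfolding env_power_def by (rule complex_norm_square)
    also have "\<dots> = (\<Sum>k<?L. \<Sum>l<?L. (a ! k * exp (2 * of_real pi * \<i> * of_real ((f0 + real k * df) * t))) *
         (cnj (a!l) * cnj (exp (2 * of_real pi * \<i> * of_real ((f0 + real l * df) * t)))))"
      unfolding env_signal_def cnj_sum complex_cnj_mult sum_product by simp
    also have "\<dots> = (\<Sum>k<?L. \<Sum>l<?L. ?G k l t)"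
      by (intro sum.cong refl, subst E_mul[symmetric]) (simp only: mult_ac)
    finally show ?thesis .
  qed
  have hi: "((\<lambda>t. \<Sum>k<?L. \<Sum>l<?L. ?G k l t) has_integral
        (\<Sum>k<?L. \<Sum>l<?L. (a!k * cnj (a!l)) * (if int k - int l = 0 then of_real T else 0))) {0..T}"
    by (intro has_integral_sum finite_lessThan has_integral_mult_right exp_integral[OF T Tdf m])
  have "(\<Sum>k<?L. \<Sum>l<?L. (a!k * cnj (a!l)) * (if int k - int l = 0 then of_real T else 0))
       = (\<Sum>k<?L. a!k * cnj (a!k) * of_real T)"
  proof (intro sum.cong refl)
    fix k assume k: "k \<in> {..<?L}"
    have "(\<Sum>l<?L. (a!k * cnj (a!l)) * (if int k - int l = 0 then of_real T else 0))
        = (\<Sum>l<?L. if l = k then a!k * cnj (a!l) * of_real T else 0)"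
      by (intro sum.cong refl) auto
    also have "\<dots> = a!k * cnj (a!k) * of_real T" using k by (simp add: sum.delta')
    finally show "(\<Sum>l<?L. (a!k * cnj (a!l)) * (if int k - int l = 0 then of_real T else 0)) = a!k * cnj (a!k) * of_real T" .
  qed
  also have "\<dots> = of_real (T * (\<Sum>k<?L. (cmod (a!k))\<^sup>2))"
    by (simp add: complex_norm_square[symmetric] sum_distrib_left mult_ac)
  finally have "((\<lambda>t. complex_of_real (env_power f0 df a t)) has_integral
        of_real (T * (\<Sum>k<?L. (cmod (a!k))\<^sup>2))) {0..T}"
    using hi key by simp
  from has_integral_Re[OF this] have "(env_power f0 df a has_integral (T * (\<Sum>k<?L. (cmod (a!k))\<^sup>2))) {0..T}"
    by simp
  then show ?thesis by (rule integral_unique)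
qed

definition cqam :: complex where "cqam = of_real (sqrt 2 / 2) * exp (of_real pi * \<i> / 4)"

lemma cmod_cqam: "cmod cqam = sqrt 2 / 2"
  unfolding cqam_def by (simp add: norm_mult norm_exp_eq_Re)

lemma qam_signal:
  assumes "\<And>i. i < n \<Longrightarrow> length (ss i) = N"
  shows "env_signal f0 df (qam_seq N n ss) t
       = cqam * (\<Sum>i<n. of_nat (2 ^ (n - 1 - i)) * env_signal f0 df (ss i) t)"
proof -
  have "env_signal f0 df (qam_seq N n ss) t
     = (\<Sum>k<N. cqam * (\<Sum>i<n. of_nat (2 ^ (n - 1 - i)) * (ss i ! k))
          * exp (2 * of_real pi * \<i> * of_real ((f0 + real k * df) * t)))"
    unfolding env_signal_def qam_seq_def cqam_def by (intro sum.cong) auto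
  also have "\<dots> = cqam * (\<Sum>i<n. of_nat (2 ^ (n - 1 - i)) * (\<Sum>k<N. (ss i ! k)
          * exp (2 * of_real pi * \<i> * of_real ((f0 + real k * df) * t))))"
    by (simp add: sum_distrib_left sum_distrib_right mult_ac sum.swap[of _ "{..<N}"])
  also have "\<dots> = cqam * (\<Sum>i<n. of_nat (2 ^ (n - 1 - i)) * env_signal f0 df (ss i) t)"
    unfolding env_signal_def using assms by simp
  finally show ?thesis .
qed

lemma qpsk_norm: "qpsk_seq N s \<Longrightarrow> k < N \<Longrightarrow> cmod (s ! k) = 1"
  unfolding qpsk_seq_def by (auto dest!: nth_mem)

lemma qpsk_signal_bound:
  assumes "qpsk_seq N s" shows "cmod (env_signal f0 df s t) \<le> N"
proof -
  have "cmod (env_signal f0 df s t) \<le> (\<Sum>k<length s. cmod (s ! k * exp (2 * of_real pi * \<i> * of_real ((f0 + real k * df) * t))))"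
    unfolding env_signal_def by (rule norm_sum)
  also have "\<dots> = (\<Sum>k<N. 1)"
    using assms qpsk_norm[OF assms] by (intro sum.cong) (auto simp: qpsk_seq_def norm_mult norm_exp_eq_Re)
  finally show ?thesis by simp
qed

lemma PEP_upper:
  assumes "qpsk_seq N s" "t \<in> {0..T}"
  shows "env_power f0 df s t \<le> PEP T f0 df s"
  unfolding PEP_def
proof (rule cSUP_upper[OF assms(2)])
  show "bdd_above (env_power f0 df s ` {0..T})"
  proof (rule bdd_aboveI2)
    fix t show "env_power f0 df s t \<le> (real N)\<^sup>2"
      unfolding env_power_def using qpsk_signal_bound[OF assms(1)] by (simp add: power_mono)
  qed
qed

lemma qam_PEP:
  fixes x y T :: real
  assumes T: "T > 0" and x: "x \<ge> 0" and y: "y \<ge> 0"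
    and q: "\<And>i. i < n \<Longrightarrow> qpsk_seq N (ss i)"
    and p: "\<And>i. i < n \<Longrightarrow> PEP T f0 df (ss i) \<le> x * y ^ (2 * i) * real N"
  shows "PEP T f0 df (qam_seq N n ss) \<le> 1/2 * x * N * (\<Sum>i<n. 2 ^ (n - 1 - i) * y ^ i)\<^sup>2"
  unfolding PEP_def
proof (rule cSUP_least)
  show "{0..T} \<noteq> {}" using T by simp
  fix t assume t: "t \<in> {0..T}"
  define R where "R = sqrt 2 / 2 * sqrt (x * N) * (\<Sum>i<n. 2 ^ (n - 1 - i) * y ^ i)"
  have len: "\<And>i. i < n \<Longrightarrow> length (ss i) = N" using q by (simp add: qpsk_seq_def)
  have bi: "cmod (env_signal f0 df (ss i) t) \<le> y ^ i * sqrt (x * N)" if i: "i < n" for i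
  proof -
    have "cmod (env_signal f0 df (ss i) t) = sqrt (env_power f0 df (ss i) t)"
      by (simp add: env_power_def)
    also have "\<dots> \<le> sqrt (x * y ^ (2 * i) * real N)"
      using PEP_upper[OF q[OF i] t, of f0 df] p[OF i] by simp
    also have "\<dots> = y ^ i * sqrt (x * N)"
      using y by (simp add: real_sqrt_mult power_mult power2_eq_square[symmetric] mult_ac)
    finally show ?thesis .
  qed
  have "cmod (env_signal f0 df (qam_seq N n ss) t)
      = sqrt 2 / 2 * cmod (\<Sum>i<n. of_nat (2 ^ (n - 1 - i)) * env_signal f0 df (ss i) t)"
    using qam_signal[OF len] by (simp add: norm_mult cmod_cqam)
  also have "\<dots> \<le> sqrt 2 / 2 * (\<Sum>i<n. 2 ^ (n - 1 - i) * (y ^ i * sqrt (x * N)))"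
  proof (intro mult_left_mono)
    have "cmod (\<Sum>i<n. of_nat (2 ^ (n - 1 - i)) * env_signal f0 df (ss i) t)
        \<le> (\<Sum>i<n. cmod (of_nat (2 ^ (n - 1 - i)) * env_signal f0 df (ss i) t))" by (rule norm_sum)
    also have "\<dots> \<le> (\<Sum>i<n. 2 ^ (n - 1 - i) * (y ^ i * sqrt (x * N)))"
      by (intro sum_mono) (auto simp: norm_mult norm_power intro!: mult_left_mono bi)
    finally show "cmod (\<Sum>i<n. of_nat (2 ^ (n - 1 - i)) * env_signal f0 df (ss i) t)
        \<le> (\<Sum>i<n. 2 ^ (n - 1 - i) * (y ^ i * sqrt (x * N)))" .
  qed simp
  also have "\<dots> = R" unfolding R_def by (simp add: sum_distrib_left mult_ac)
  finally have "cmod (env_signal f0 df (qam_seq N n ss) t) \<le> R" .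
  then have "env_power f0 df (qam_seq N n ss) t \<le> R\<^sup>2"
    unfolding env_power_def by (simp add: power_mono)
  also have "R\<^sup>2 = 1/2 * x * N * (\<Sum>i<n. 2 ^ (n - 1 - i) * y ^ i)\<^sup>2"
    unfolding R_def using x by (simp add: power_mult_distrib power_divide)
  finally show "env_power f0 df (qam_seq N n ss) t \<le> 1/2 * x * N * (\<Sum>i<n. 2 ^ (n - 1 - i) * y ^ i)\<^sup>2" .
qed

lemma rot2: "rot_seq 2 s = map uminus s"
  unfolding rot_seq_def by simp

lemma sym_zero:
  fixes i i' n N :: nat and S :: "nat \<Rightarrow> complex list set"
  assumes i: "i < n" and i': "i' \<noteq> i"
    and q: "\<And>i s. i < n \<Longrightarrow> s \<in> S i \<Longrightarrow> qpsk_seq N s"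
    and r: "\<And>i s. i < n \<Longrightarrow> s \<in> S i \<Longrightarrow> rot_seq 2 s \<in> S i"
  shows "(\<Sum>ss\<in>PiE {..<n} S. \<Sum>k<N. ss i ! k * cnj (ss i' ! k)) = 0"
proof -
  let ?P = "PiE {..<n} S"
  let ?h = "\<lambda>ss. \<Sum>k<N. ss i ! k * cnj (ss i' ! k)"
  define \<phi> where "\<phi> ss = ss(i := map uminus (ss i))" for ss :: "nat \<Rightarrow> complex list"
  have mem: "\<phi> ss \<in> ?P" if "ss \<in> ?P" for ss
    using that i r[of i "ss i"] unfolding \<phi>_def rot2 by (auto simp: PiE_iff extensional_def)
  have inv: "\<phi> (\<phi> ss) = ss" for ss
    unfolding \<phi>_def by (auto simp: comp_def)
  have bij: "bij_betw \<phi> ?P ?P"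
    by (rule bij_betw_byWitness[where f' = \<phi>]) (use mem inv in auto)
  have neg: "?h (\<phi> ss) = - ?h ss" if "ss \<in> ?P" for ss
  proof -
    have len: "length (ss i) = N" using q[of i "ss i"] i that by (auto simp: PiE_iff qpsk_seq_def)
    show ?thesis unfolding \<phi>_def using i' len by (simp add: sum_negf[symmetric])
  qed
  have "(\<Sum>ss\<in>?P. ?h ss) = (\<Sum>ss\<in>?P. ?h (\<phi> ss))"
    using sum.reindex_bij_betw[OF bij, of ?h] by simp
  also have "\<dots> = - (\<Sum>ss\<in>?P. ?h ss)"
    using neg by (simp add: sum_negf[symmetric])
  finally show ?thesis by simp
qed

definition cross :: "nat \<Rightarrow> nat \<Rightarrow> (nat \<Rightarrow> complex list) \<Rightarrow> complex" where
  "cross n N ss = (\<Sum>i<n. \<Sum>i'\<in>{..<n}-{i}. of_nat (2 ^ (n - 1 - i) * 2 ^ (n - 1 - i')) *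
      (\<Sum>k<N. ss i ! k * cnj (ss i' ! k)))"

lemma qam_norm2:
  assumes q: "\<And>i. i < n \<Longrightarrow> qpsk_seq N (ss i)"
  shows "(\<Sum>k<length (qam_seq N n ss). (cmod (qam_seq N n ss ! k))\<^sup>2)
      = 1/2 * (real N * (\<Sum>i<n. (2 ^ (n - 1 - i))\<^sup>2) + Re (cross n N ss))"
proof -
  define w where "w i = (of_nat (2 ^ (n - 1 - i)) :: complex)" for i
  define z where "z k = (\<Sum>i<n. w i * (ss i ! k))" for k
  have lenq: "length (qam_seq N n ss) = N" by (simp add: qam_seq_def)
  have nq: "qam_seq N n ss ! k = cqam * z k" if "k < N" for k
    using that by (simp add: qam_seq_def cqam_def z_def w_def)
  have one: "ss i ! k * cnj (ss i ! k) = 1" if "i < n" "k < N" for i k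
    using qpsk_norm[OF q[OF that(1)] that(2)] complex_norm_square[of "ss i ! k"] by simp
  have zk: "z k * cnj (z k) = (\<Sum>i<n. w i * w i) + (\<Sum>i<n. \<Sum>i'\<in>{..<n}-{i}. w i * w i' * (ss i ! k * cnj (ss i' ! k)))"
    if k: "k < N" for k
  proof -
    have "z k * cnj (z k) = (\<Sum>i<n. \<Sum>i'<n. w i * w i' * (ss i ! k * cnj (ss i' ! k)))"
      unfolding z_def cnj_sum complex_cnj_mult sum_product by (simp add: w_def mult_ac)
    also have "\<dots> = (\<Sum>i<n. w i * w i + (\<Sum>i'\<in>{..<n}-{i}. w i * w i' * (ss i ! k * cnj (ss i' ! k))))"
    proof (intro sum.cong refl)
      fix i assume i: "i \<in> {..<n}"
      show "(\<Sum>i'<n. w i * w i' * (ss i ! k * cnj (ss i' ! k))) = w i * w i + (\<Sum>i'\<in>{..<n}-{i}. w i * w i' * (ss i ! k * cnj (ss i' ! k)))"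
        using sum.remove[OF finite_lessThan i, of "\<lambda>i'. w i * w i' * (ss i ! k * cnj (ss i' ! k))"] one[of i k] i k by simp
    qed
    also have "\<dots> = (\<Sum>i<n. w i * w i) + (\<Sum>i<n. \<Sum>i'\<in>{..<n}-{i}. w i * w i' * (ss i ! k * cnj (ss i' ! k)))"
      by (simp add: sum.distrib)
    finally show ?thesis .
  qed
  have "complex_of_real (\<Sum>k<length (qam_seq N n ss). (cmod (qam_seq N n ss ! k))\<^sup>2)
      = (\<Sum>k<N. of_real (1/2) * (z k * cnj (z k)))"
    unfolding lenq of_real_sum
  proof (intro sum.cong refl)
    fix k assume "k \<in> {..<N}"
    then have "cmod (qam_seq N n ss ! k) = sqrt 2 / 2 * cmod (z k)" by (simp add: nq norm_mult cmod_cqam)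
    then have "(cmod (qam_seq N n ss ! k))\<^sup>2 = 1/2 * (cmod (z k))\<^sup>2"
      by (simp only: power_mult_distrib) (simp add: power_divide)
    then show "complex_of_real ((cmod (qam_seq N n ss ! k))\<^sup>2) = of_real (1/2) * (z k * cnj (z k))"
      by (simp only: complex_norm_square[symmetric] of_real_mult)
  qed
  also have "\<dots> = of_real (1/2) * ((\<Sum>k<N. \<Sum>i<n. w i * w i) +
      (\<Sum>k<N. \<Sum>i<n. \<Sum>i'\<in>{..<n}-{i}. w i * w i' * (ss i ! k * cnj (ss i' ! k))))"
  proof -
    have "(\<Sum>k<N. of_real (1/2) * (z k * cnj (z k))) = (\<Sum>k<N. of_real (1/2) * ((\<Sum>i<n. w i * w i) + (\<Sum>i<n. \<Sum>i'\<in>{..<n}-{i}. w i * w i' * (ss i ! k * cnj (ss i' ! k)))))"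
      by (intro sum.cong refl) (simp add: zk)
    then show ?thesis by (simp only: sum.distrib sum_distrib_left distrib_left)
  qed
  also have "(\<Sum>k<N. \<Sum>i<n. \<Sum>i'\<in>{..<n}-{i}. w i * w i' * (ss i ! k * cnj (ss i' ! k))) = cross n N ss"
    unfolding cross_def w_def
    by (simp add: sum.swap[of _ "{..<N}"] sum_distrib_left)
  also have "(\<Sum>k<N. \<Sum>i<n. w i * w i) = of_real (real N * (\<Sum>i<n. (2 ^ (n - 1 - i))\<^sup>2))"
    by (simp add: w_def power2_eq_square)
  finally have "complex_of_real (\<Sum>k<length (qam_seq N n ss). (cmod (qam_seq N n ss ! k))\<^sup>2)
      = of_real (1/2) * (of_real (real N * (\<Sum>i<n. (2 ^ (n - 1 - i))\<^sup>2)) + cross n N ss)" .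
  then have "Re (complex_of_real (\<Sum>k<length (qam_seq N n ss). (cmod (qam_seq N n ss ! k))\<^sup>2))
     = Re (of_real (1/2) * (of_real (real N * (\<Sum>i<n. (2 ^ (n - 1 - i))\<^sup>2)) + cross n N ss))" by (rule arg_cong)
  then show ?thesis by (simp only: Re_complex_of_real) simp
qed

lemma cross_sum_zero:
  fixes n N :: nat and S :: "nat \<Rightarrow> complex list set"
  assumes q: "\<And>i s. i < n \<Longrightarrow> s \<in> S i \<Longrightarrow> qpsk_seq N s"
    and r: "\<And>i s. i < n \<Longrightarrow> s \<in> S i \<Longrightarrow> rot_seq 2 s \<in> S i"
  shows "(\<Sum>ss\<in>PiE {..<n} S. cross n N ss) = 0"
proof -
  let ?P = "PiE {..<n} S"
  have "(\<Sum>ss\<in>?P. cross n N ss) = (\<Sum>i<n. \<Sum>i'\<in>{..<n}-{i}. of_nat (2 ^ (n - 1 - i) * 2 ^ (n - 1 - i')) *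
      (\<Sum>ss\<in>?P. \<Sum>k<N. ss i ! k * cnj (ss i' ! k)))"
    unfolding cross_def sum_distrib_left
    by (subst sum.swap, rule sum.cong[OF refl], subst sum.swap, simp)
  also have "\<dots> = 0"
  proof (intro sum.neutral ballI)
    fix i i' assume i: "i \<in> {..<n}" and i': "i' \<in> {..<n}-{i}"
    have "(\<Sum>ss\<in>?P. \<Sum>k<N. ss i ! k * cnj (ss i' ! k)) = 0"
      by (rule sym_zero) (use i i' q r in auto)
    then show "of_nat (2 ^ (n - 1 - i) * 2 ^ (n - 1 - i')) *
      (\<Sum>ss\<in>?P. \<Sum>k<N. ss i ! k * cnj (ss i' ! k)) = 0" by simp
  qed
  finally show ?thesis .
qed

lemma P_av_val:
  fixes T f0 df :: real and N n :: nat and S :: "nat \<Rightarrow> complex list set"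
  assumes T_pos: "T > 0"
    and Tdf: "\<exists>m::nat. m > 0 \<and> T * df = real m"
    and S_ne: "\<And>i. i < n \<Longrightarrow> S i \<noteq> {}"
    and q: "\<And>i s. i < n \<Longrightarrow> s \<in> S i \<Longrightarrow> qpsk_seq N s"
    and r: "\<And>i s. i < n \<Longrightarrow> s \<in> S i \<Longrightarrow> rot_seq 2 s \<in> S i"
  shows "P_av T f0 df N n S = 1/2 * (real N * (\<Sum>i<n. (2 ^ (n - 1 - i))\<^sup>2))"
proof -
  obtain m :: nat where m: "m > 0" "T * df = real m" using Tdf by blast
  let ?P = "PiE {..<n} S"
  let ?D = "real N * (\<Sum>i<n. (2 ^ (n - 1 - i))\<^sup>2)"
  have finS: "finite (S i)" if "i < n" for i
  proof (rule finite_subset)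
    show "S i \<subseteq> {xs. set xs \<subseteq> {1, \<i>, -1, -\<i>} \<and> length xs \<le> N}"
      using q[OF that] by (auto simp: qpsk_seq_def)
    show "finite {xs. set xs \<subseteq> {1, \<i>, -1, -\<i>} \<and> length xs \<le> N}"
      by (rule finite_lists_length_le) simp
  qed
  have cardP: "card ?P = (\<Prod>i<n. card (S i))" by (simp add: card_PiE)
  have cpos: "(\<Prod>i<n. card (S i)) > 0"
    using finS S_ne by (auto simp: prod_pos card_gt_0_iff)
  have each: "(1 / T) * integral {0..T} (env_power f0 df (qam_seq N n ss)) = 1/2 * (?D + Re (cross n N ss))"
    if ss: "ss \<in> ?P" for ss
  proof -
    have qs: "\<And>i. i < n \<Longrightarrow> qpsk_seq N (ss i)" using ss q by (auto simp: PiE_iff)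
    show ?thesis
      using env_power_integral[OF T_pos m(2) m(1), of f0 "qam_seq N n ss"] qam_norm2[OF qs] T_pos by simp
  qed
  have "(\<Sum>ss\<in>?P. (1 / T) * integral {0..T} (env_power f0 df (qam_seq N n ss)))
      = (\<Sum>ss\<in>?P. 1/2 * ?D + 1/2 * Re (cross n N ss))"
    using each by (intro sum.cong) (auto simp: algebra_simps)
  also have "\<dots> = real (card ?P) * (1/2 * ?D) + 1/2 * Re (\<Sum>ss\<in>?P. cross n N ss)"
    by (simp add: sum.distrib sum_distrib_left Re_sum)
  also have "\<dots> = real (card ?P) * (1/2 * ?D)"
    using cross_sum_zero[OF q r] by simp
  finally show ?thesis
    unfolding P_av_def cardP using cpos by simp
qed

lemma W_val: "3 * (\<Sum>i<n. ((2::real) ^ (n - 1 - i))\<^sup>2) = 4 ^ n - 1"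
proof -
  have "(\<Sum>i<n. ((2::real) ^ (n - 1 - i))\<^sup>2) = (\<Sum>i<n. (4::real) ^ (n - Suc i))"
    by (intro sum.cong refl) (simp add: power_mult[symmetric] mult.commute power_mult)
  also have "\<dots> = (\<Sum>i<n. (4::real) ^ i)" by (rule sum.nat_diff_reindex)
  also have "\<dots> = (1 - 4 ^ n) / (1 - 4)" by (simp add: sum_gp_strict)
  finally show ?thesis by (simp add: field_simps)
qed

lemma Gs_val:
  fixes y :: real assumes n: "n \<ge> 1"
  shows "(\<Sum>i<n. 2 ^ (n - 1 - i) * y ^ i) = 2 ^ (n - 1) * (\<Sum>i<n. (y / 2) ^ i)"
  unfolding sum_distrib_left
proof (intro sum.cong refl)
  fix i assume "i \<in> {..<n}"
  then have "i \<le> n - 1" by auto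
  then show "2 ^ (n - 1 - i) * y ^ i = 2 ^ (n - 1) * (y / 2) ^ i"
  proof -
    have "(2::real) ^ (n - 1) = 2 ^ (n - 1 - i) * 2 ^ i"
      using \<open>i \<le> n - 1\<close> by (simp add: power_add[symmetric])
    then show ?thesis by (simp add: power_divide)
  qed
qed

lemma final_arith:
  fixes x N q G F :: real
  assumes N: "N > 0" and F: "F > 1" and q: "q\<^sup>2 * 4 = F"
  shows "1/2 * x * N * (q * G)\<^sup>2 / (1/2 * (N * ((F - 1) / 3))) = 3/4 * (F / (F - 1)) * G\<^sup>2 * x"
proof -
  have "F - 1 > 0" using F by simp
  then show ?thesis using N unfolding q[symmetric] by (simp add: field_simps power_mult_distrib)
qed

theorem theorem1:
  fixes T f0 df x y :: real and N n :: nat and S :: "nat \<Rightarrow> complex list set"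
  assumes T_pos: "T > 0"
    and Tdf: "\<exists>m::nat. m > 0 \<and> T * df = real m"
    and N_ge: "N \<ge> 1" and n_ge: "n \<ge> 1"
    and x_gt: "x > 1" and y_ge: "1 \<le> y" and y_lt: "y < 2"
    and S_ne: "\<And>i. i < n \<Longrightarrow> S i \<noteq> {}"
    and S_qpsk: "\<And>i s. i < n \<Longrightarrow> s \<in> S i \<Longrightarrow> qpsk_seq N s"
    and S_pep: "\<And>i s. i < n \<Longrightarrow> s \<in> S i \<Longrightarrow> PEP T f0 df s \<le> x * y ^ (2 * i) * real N"
    and S_rot: "\<And>i s m. i < n \<Longrightarrow> s \<in> S i \<Longrightarrow> m < 4 \<Longrightarrow> rot_seq m s \<in> S i"
  shows "PMEPR T f0 df N n S
          \<le> 3 / 4 * (2 ^ (2 * n) / (2 ^ (2 * n) - 1))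
              * ((1 - (y / 2) ^ n) / (1 - y / 2))\<^sup>2 * x"
proof -
  let ?P = "PiE {..<n} S"
  define W :: real where "W = (\<Sum>i<n. ((2::real) ^ (n - 1 - i))\<^sup>2)"
  define G where "G = (1 - (y / 2) ^ n) / (1 - y / 2)"
  define B where "B = 1/2 * x * N * (\<Sum>i<n. 2 ^ (n - 1 - i) * y ^ i)\<^sup>2"
  have r2: "\<And>i s. i < n \<Longrightarrow> s \<in> S i \<Longrightarrow> rot_seq 2 s \<in> S i"
    using S_rot by simp
  have Pav: "P_av T f0 df N n S = 1/2 * (real N * W)"
    unfolding W_def by (rule P_av_val[OF T_pos Tdf S_ne S_qpsk r2])
  have W3: "3 * W = 4 ^ n - 1" unfolding W_def by (rule W_val)
  have F: "(4::real) ^ n \<ge> 4" using n_ge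
    by (metis power_increasing power_one_right numeral_le_iff semiring_norm(68) zero_le_numeral
        one_le_numeral)
  have Wpos: "W > 0" using W3 F by simp
  have Pavpos: "P_av T f0 df N n S > 0" unfolding Pav using Wpos N_ge by simp
  have setq: "qam_set N n S \<subseteq> qam_seq N n ` ?P"
  proof
    fix a assume "a \<in> qam_set N n S"
    then obtain ss where ss: "\<And>i. i < n \<Longrightarrow> ss i \<in> S i" and a: "a = qam_seq N n ss"
      unfolding qam_set_def by blast
    have "qam_seq N n ss = qam_seq N n (restrict ss {..<n})"
      unfolding qam_seq_def by (intro map_cong refl arg_cong2[where f="(*)"] sum.cong) auto
    moreover have "restrict ss {..<n} \<in> ?P" using ss by auto
    ultimately show "a \<in> qam_seq N n ` ?P" using a by blast
  qed
  have finS: "finite (S i)" if "i < n" for i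
  proof (rule finite_subset)
    show "S i \<subseteq> {xs. set xs \<subseteq> {1, \<i>, -1, -\<i>} \<and> length xs \<le> N}"
      using S_qpsk[OF that] by (auto simp: qpsk_seq_def)
    show "finite {xs. set xs \<subseteq> {1, \<i>, -1, -\<i>} \<and> length xs \<le> N}"
      by (rule finite_lists_length_le) simp
  qed
  have fin: "finite (qam_set N n S)"
    by (rule finite_subset[OF setq]) (intro finite_imageI finite_PiE, auto intro: finS)
  obtain ss0 where ss0: "ss0 \<in> ?P" using S_ne by (metis PiE_eq_empty_iff ex_in_conv lessThan_iff)
  have ne: "qam_set N n S \<noteq> {}"
    using ss0 unfolding qam_set_def by (auto simp: PiE_iff)
  have bnd: "PEP T f0 df a \<le> B" if aq: "a \<in> qam_set N n S" for a
  proof -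
    obtain ss where ss: "\<And>i. i < n \<Longrightarrow> ss i \<in> S i" and a: "a = qam_seq N n ss"
      using aq unfolding qam_set_def by blast
    show ?thesis unfolding a B_def
      by (rule qam_PEP) (use T_pos x_gt y_ge ss S_qpsk S_pep in auto)
  qed
  have Max: "Max (PEP T f0 df ` qam_set N n S) \<le> B"
    using fin ne bnd by simp
  have "PMEPR T f0 df N n S \<le> B / P_av T f0 df N n S"
    unfolding PMEPR_def using Max Pavpos by (intro divide_right_mono) auto
  also have "B / P_av T f0 df N n S = 3 / 4 * (2 ^ (2 * n) / (2 ^ (2 * n) - 1)) * G\<^sup>2 * x"
  proof -
    have Gs: "(\<Sum>i<n. 2 ^ (n - 1 - i) * y ^ i) = 2 ^ (n - 1) * G"
      unfolding G_def Gs_val[OF n_ge] using y_lt by (simp add: sum_gp_strict)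
    have p4: "(2::real) ^ (2 * n) = 4 ^ n" by (simp add: power_mult)
    have q4: "((2::real) ^ (n - 1))\<^sup>2 * 4 = 4 ^ n"
    proof -
      have "((2::real) ^ (n - 1))\<^sup>2 * 4 = 2 ^ (2 * (n - 1) + 2)"
        by (simp add: power_add power_even_eq)
      also have "2 * (n - 1) + 2 = 2 * n" using n_ge by simp
      finally show ?thesis using p4 by simp
    qed
    have W': "W = (4 ^ n - 1) / 3" using W3 by simp
    show ?thesis unfolding Pav B_def Gs p4 W'
      by (rule final_arith) (use N_ge F q4 in auto)
  qed
  finally show ?thesis unfolding G_def .
qed

end
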